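(* Let $k\ge 2$. In the online version of balanced interval $k$-coloring, the imbalance is unbounded: for every (deterministic) online algorithm and every $M\in\mathbb{N}$, there is a finite input sequence of intervals on which the coloring produced by the algorithm has imbalance greater than $M$.
   Context: Online model: closed intervals arrive one at a time in order of their startpoints; upon arrival the full interval (including its endpoint) is revealed and the algorithm must irrevocably assign it a color from $\{1,\dots,k\}$. For a coloring $\chi$ of a finite set of intervals, let $c_i(x)$ be the number of intervals containing $x$ with color $i$; the imbalance of $\chi$ is $\max_{x\in\mathbb{R}}\max_{i,j}|c_i(x)-c_j(x)|$. *)

theory Defs
  imports Complex_Main
begin

type_synonym interval = "real \<times> real"

text \<open>A deterministic online algorithm: given the previously arrived intervals
(in arrival order) and the newly arrived interval (fully revealed), it returns a color.
Its own earlier choices are determined by the earlier prefixes, so this captures all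
deterministic online algorithms.\<close>
type_synonym online_alg = "interval list \<Rightarrow> interval \<Rightarrow> nat"

definition valid_input :: "interval list \<Rightarrow> bool" where
  "valid_input xs \<longleftrightarrow> (\<forall>I\<in>set xs. fst I \<le> snd I) \<and> sorted (map fst xs)"

definition run_alg :: "online_alg \<Rightarrow> interval list \<Rightarrow> nat list" where
  "run_alg A xs = map (\<lambda>n. A (take n xs) (xs ! n)) [0..<length xs]"

definition color_count :: "interval list \<Rightarrow> nat list \<Rightarrow> nat \<Rightarrow> real \<Rightarrow> nat" where
  "color_count xs cs i x =
     card {n. n < length xs \<and> fst (xs ! n) \<le> x \<and> x \<le> snd (xs ! n) \<and> cs ! n = i}"

definition imbalance :: "nat \<Rightarrow> interval list \<Rightarrow> nat list \<Rightarrow> nat" where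
  "imbalance k xs cs = Max {nat \<bar>int (color_count xs cs i x) - int (color_count xs cs j x)\<bar>
                           | x i j. i \<in> {1..k} \<and> j \<in> {1..k}}"

end

theory Submission
  imports Defs
begin

definition mid :: "real \<times> real \<Rightarrow> real" where "mid w = (fst w + snd w) / 2"

fun win :: "online_alg \<Rightarrow> nat \<Rightarrow> real \<times> real" where
  "win A 0 = (0, 1)"
| "win A (Suc n) = (let w = win A n; e = (fst w + snd w) / 2 in
     if A (map (\<lambda>i. (0, (fst (win A i) + snd (win A i)) / 2)) [0..<n]) (0, e) = 1
     then (fst w, e) else (e, snd w))"

definition seqI :: "online_alg \<Rightarrow> nat \<Rightarrow> interval list" where
  "seqI A n = map (\<lambda>i. (0, mid (win A i))) [0..<n]"

definition col :: "online_alg \<Rightarrow> nat \<Rightarrow> nat" where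
  "col A i = A (seqI A i) (0, mid (win A i))"

lemma win_Suc: "win A (Suc n) = (if col A n = 1 then (fst (win A n), mid (win A n))
     else (mid (win A n), snd (win A n)))"
  by (simp add: col_def seqI_def mid_def Let_def)

lemma inv: "fst (win A n) < snd (win A n) \<and> 0 \<le> fst (win A n) \<and>
   (\<forall>i<n. \<forall>x. fst (win A n) < x \<and> x < snd (win A n) \<longrightarrow> (x \<le> mid (win A i) \<longleftrightarrow> col A i = 1))"
proof (induction n)
  case 0 then show ?case by simp
next
  case (Suc n)
  then show ?case
    by (auto simp: win_Suc mid_def less_Suc_eq simp del: win.simps)
qed

lemma run_seq: "i < n \<Longrightarrow> run_alg A (seqI A n) ! i = col A i"
  by (simp add: run_alg_def seqI_def col_def take_map)

lemma len_seq [simp]: "length (seqI A n) = n" by (simp add: seqI_def)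

lemma nth_seq: "i < n \<Longrightarrow> seqI A n ! i = (0, mid (win A i))" by (simp add: seqI_def)

theorem theorem8:
  fixes k :: nat and A :: online_alg and M :: nat
  assumes "k \<ge> 2"
    and "\<And>xs I. A xs I \<in> {1..k}"
  shows "\<exists>xs. valid_input xs \<and> imbalance k xs (run_alg A xs) > M"
proof -
  define n where "n = k * (2*M+1)"
  define xs where "xs = seqI A n"
  define cs where "cs = run_alg A xs"
  have cs: "\<And>i. i < n \<Longrightarrow> cs ! i = col A i" by (simp add: cs_def xs_def run_seq)
  have midpos: "\<And>i. 0 \<le> mid (win A i)" proof -
    fix i have "fst (win A i) < snd (win A i) \<and> 0 \<le> fst (win A i)" using inv[of A i] by blast
    then show "0 \<le> mid (win A i)" by (simp add: mid_def)
  qed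
  have valid: "valid_input xs"
  proof -
    have "map fst xs = replicate n 0" by (simp add: xs_def seqI_def o_def map_replicate_const)
    then show ?thesis unfolding valid_input_def by (auto simp: xs_def seqI_def midpos)
  qed
  define S where "S = {nat \<bar>int (color_count xs cs i x) - int (color_count xs cs j x)\<bar>
                           | x i j. i \<in> {1..k} \<and> j \<in> {1..k}}"
  have ccle: "\<And>c x. color_count xs cs c x \<le> n"
  proof -
    fix c x
    have "{n'. n' < length xs \<and> fst (xs ! n') \<le> x \<and> x \<le> snd (xs ! n') \<and> cs ! n' = c} \<subseteq> {..<n}"
      by (auto simp: xs_def)
    from card_mono[OF _ this] show "color_count xs cs c x \<le> n" by (simp add: color_count_def xs_def)
  qed
  have "S \<subseteq> {..n}"
  proof
    fix v assume "v \<in> S"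
    then obtain x i j where v: "v = nat \<bar>int (color_count xs cs i x) - int (color_count xs cs j x)\<bar>"
      unfolding S_def by blast
    show "v \<in> {..n}" using ccle[of i x] ccle[of j x] unfolding v by auto
  qed
  then have finS: "finite S" using finite_subset by blast
  have imb: "imbalance k xs cs = Max S" by (simp add: imbalance_def S_def)
  define cnt where "cnt c = card {i. i < n \<and> col A i = c}" for c
  have cc0: "\<And>c. color_count xs cs c 0 = cnt c"
    unfolding color_count_def cnt_def
    by (rule arg_cong[where f=card]) (auto simp: xs_def nth_seq cs midpos)
  define x0 where "x0 = mid (win A n)"
  have x0: "fst (win A n) < x0" "x0 < snd (win A n)" "0 \<le> x0"
    using inv[of A n] by (auto simp: x0_def mid_def)
  have key: "\<And>i. i < n \<Longrightarrow> (x0 \<le> mid (win A i) \<longleftrightarrow> col A i = 1)"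
    using inv[of A n] x0 by blast
  have cc1: "color_count xs cs 1 x0 = cnt 1"
    unfolding color_count_def cnt_def
    by (rule arg_cong[where f=card]) (auto simp: xs_def nth_seq cs x0 key)
  have cc2: "color_count xs cs 2 x0 = 0"
  proof -
    have "{n'. n' < length xs \<and> fst (xs ! n') \<le> x0 \<and> x0 \<le> snd (xs ! n') \<and> cs ! n' = 2} = {}"
      by (auto simp: xs_def nth_seq cs x0 key)
    then show ?thesis by (simp add: color_count_def)
  qed
  have k1: "1 \<in> {1..k}" "2 \<in> {1..k}" using assms(1) by auto
  have inS: "\<And>x i j. i \<in> {1..k} \<Longrightarrow> j \<in> {1..k} \<Longrightarrow>
      nat \<bar>int (color_count xs cs i x) - int (color_count xs cs j x)\<bar> \<le> Max S"
    by (rule Max_ge[OF finS]) (auto simp: S_def)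
  show ?thesis
  proof (cases "cnt 1 > M")
    case True
    have "nat \<bar>int (color_count xs cs 1 x0) - int (color_count xs cs 2 x0)\<bar> \<le> Max S"
      using inS k1 by blast
    then have "M < Max S" using True cc1 cc2 by simp
    then show ?thesis using valid imb cs_def by auto
  next
    case False
    show ?thesis
    proof (rule ccontr)
      assume "\<not> ?thesis"
      then have le: "Max S \<le> M" using valid imb cs_def by auto
      have bd: "\<And>c. c \<in> {1..k} \<Longrightarrow> cnt c \<le> 2*M"
      proof -
        fix c assume c: "c \<in> {1..k}"
        have "nat \<bar>int (color_count xs cs c 0) - int (color_count xs cs 1 0)\<bar> \<le> Max S"
          using inS k1 c by blast
        then show "cnt c \<le> 2*M" using le False cc0 by auto
      qed
      have U: "{..<n} = (\<Union>c\<in>{1..k}. {i. i < n \<and> col A i = c})"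
        using assms(2) by (auto simp: col_def)
      have "n = card (\<Union>c\<in>{1..k}. {i. i < n \<and> col A i = c})" using U[symmetric] by simp
      also have "\<dots> \<le> (\<Sum>c\<in>{1..k}. cnt c)"
        unfolding cnt_def by (rule card_UN_le) simp
      also have "\<dots> \<le> (\<Sum>c\<in>{1..k}. 2*M)" by (rule sum_mono) (rule bd)
      also have "\<dots> = k * (2*M)" by simp
      finally show False using assms(1) by (simp add: n_def)
    qed
  qed
qed

end
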